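(* Let $r\geq 3$ be an integer and let $x,y$ be distinct vertices of a graph $G$. If $G$ contains an $r$-compatible set of four $xy$-paths, then $G$ contains $C_{2,r}$ as an immersion.
   Context: All graphs are finite and loopless but may have parallel edges. An $xy$-path is a path with ends $x$ and $y$, written starting at $x$. Two edge-disjoint $xy$-paths $Q_1=x_1,\ldots,x_s$ and $Q_2=y_1,\ldots,y_t$ are aligned if for every two internal vertices $u=x_{i_1}=y_{j_1}$, $v=x_{i_2}=y_{j_2}$ common to both, $(i_1-i_2)(j_1-j_2)>0$. A set of pairwise edge-disjoint $xy$-paths is $r$-compatible if some two of the paths are aligned and intersect in at least $r$ vertices (counting $x$ and $y$). Lifting a pair of adjacent edges $uv,vw$ means deleting them and adding a new edge $uw$ (if $u=w$ the loop is deleted). A graph $H$ is an immersion of $G$ if a graph isomorphic to $H$ can be obtained from a subgraph of $G$ by repeatedly lifting pairs of edges; equivalently, there is an injective map $V(H)\to V(G)$ and pairwise edge-disjoint paths of $G$ joining the images of the ends of each edge of $H$. $C_{t,r}$ denotes the graph obtained from a cycle on $r$ vertices by replacing each edge by $t$ parallel edges. *)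

theory Defs
  imports Main
begin

text \<open>A finite loopless multigraph: vertex set V, edge set E, and each edge e
  has a two-element set of ends (parallel edges allowed).\<close>
definition multigraph :: "'v set \<Rightarrow> 'e set \<Rightarrow> ('e \<Rightarrow> 'v set) \<Rightarrow> bool" where
  "multigraph V E ends \<longleftrightarrow> finite V \<and> finite E \<and>
     (\<forall>e\<in>E. \<exists>u v. u \<in> V \<and> v \<in> V \<and> u \<noteq> v \<and> ends e = {u, v})"

definition is_path :: "'v set \<Rightarrow> 'e set \<Rightarrow> ('e \<Rightarrow> 'v set) \<Rightarrow> 'v list \<times> 'e list \<Rightarrow> bool" where
  "is_path V E ends P \<longleftrightarrow> fst P \<noteq> [] \<and> distinct (fst P) \<and>
     length (fst P) = length (snd P) + 1 \<and> set (fst P) \<subseteq> V \<and> set (snd P) \<subseteq> E \<and>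
     (\<forall>i < length (snd P). ends (snd P ! i) = {fst P ! i, fst P ! Suc i})"

definition xy_path :: "'v set \<Rightarrow> 'e set \<Rightarrow> ('e \<Rightarrow> 'v set) \<Rightarrow> 'v \<Rightarrow> 'v \<Rightarrow> 'v list \<times> 'e list \<Rightarrow> bool" where
  "xy_path V E ends x y P \<longleftrightarrow> is_path V E ends P \<and> hd (fst P) = x \<and> last (fst P) = y"

definition edge_disjoint :: "'v list \<times> 'e list \<Rightarrow> 'v list \<times> 'e list \<Rightarrow> bool" where
  "edge_disjoint P Q \<longleftrightarrow> set (snd P) \<inter> set (snd Q) = {}"

text \<open>Aligned: any two distinct internal vertices common to both paths occur in the
  same order on both (indices 0-based; internal means index strictly between 0 and s-1).\<close>
definition aligned :: "'v list \<times> 'e list \<Rightarrow> 'v list \<times> 'e list \<Rightarrow> bool" where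
  "aligned P Q \<longleftrightarrow>
     (\<forall>i1 i2 j1 j2.
        0 < i1 \<and> i1 < length (fst P) - 1 \<and> 0 < i2 \<and> i2 < length (fst P) - 1 \<and>
        0 < j1 \<and> j1 < length (fst Q) - 1 \<and> 0 < j2 \<and> j2 < length (fst Q) - 1 \<and>
        fst P ! i1 = fst Q ! j1 \<and> fst P ! i2 = fst Q ! j2 \<and> fst P ! i1 \<noteq> fst P ! i2
        \<longrightarrow> (int i1 - int i2) * (int j1 - int j2) > 0)"

text \<open>A set of pairwise edge-disjoint xy-paths is r-compatible if some two of the
  paths are aligned and share at least r vertices (x and y included).\<close>
definition r_compatible :: "'v set \<Rightarrow> 'e set \<Rightarrow> ('e \<Rightarrow> 'v set) \<Rightarrow> 'v \<Rightarrow> 'v \<Rightarrow> nat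
    \<Rightarrow> ('v list \<times> 'e list) set \<Rightarrow> bool" where
  "r_compatible V E ends x y r S \<longleftrightarrow>
     (\<forall>P\<in>S. xy_path V E ends x y P) \<and>
     (\<forall>P\<in>S. \<forall>Q\<in>S. P \<noteq> Q \<longrightarrow> edge_disjoint P Q) \<and>
     (\<exists>P\<in>S. \<exists>Q\<in>S. P \<noteq> Q \<and> aligned P Q \<and> card (set (fst P) \<inter> set (fst Q)) \<ge> r)"

definition immersion :: "'a set \<Rightarrow> 'b set \<Rightarrow> ('b \<Rightarrow> 'a set) \<Rightarrow>
    'v set \<Rightarrow> 'e set \<Rightarrow> ('e \<Rightarrow> 'v set) \<Rightarrow> bool" where
  "immersion VH EH endsH V E ends \<longleftrightarrow>
     (\<exists>\<phi> \<pi>. inj_on \<phi> VH \<and> \<phi> ` VH \<subseteq> V \<and>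
        (\<forall>e\<in>EH. \<exists>u v. endsH e = {u, v} \<and> xy_path V E ends (\<phi> u) (\<phi> v) (\<pi> e)) \<and>
        (\<forall>e\<in>EH. \<forall>e'\<in>EH. e \<noteq> e' \<longrightarrow> edge_disjoint (\<pi> e) (\<pi> e')))"

text \<open>C_{t,r}: cycle on vertices 0..r-1, each cycle edge replaced by t parallel edges
  (edge (i,k) joins i and (i+1) mod r).\<close>
definition C_V :: "nat \<Rightarrow> nat set" where "C_V r = {..<r}"
definition C_E :: "nat \<Rightarrow> nat \<Rightarrow> (nat \<times> nat) set" where "C_E t r = {..<r} \<times> {..<t}"
definition C_ends :: "nat \<Rightarrow> nat \<times> nat \<Rightarrow> nat set" where
  "C_ends r e = {fst e, Suc (fst e) mod r}"

end

theory Submission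
  imports Defs
begin

lemma path_distinct_edges:
  assumes "is_path V E ends (ps, es)"
  shows "distinct es"
proof -
  have d: "distinct ps" and l: "length ps = length es + 1"
    and en: "\<forall>i < length es. ends (es ! i) = {ps ! i, ps ! Suc i}"
    using assms by (auto simp: is_path_def)
  show ?thesis
  proof (subst distinct_conv_nth, intro allI impI)
    fix i j assume ij: "i < length es" "j < length es" "i \<noteq> j"
    show "es ! i \<noteq> es ! j"
    proof
      assume eq: "es ! i = es ! j"
      have "{ps ! i, ps ! Suc i} = {ps ! j, ps ! Suc j}" using en ij eq by metis
      hence "ps ! i = ps ! j \<or> ps ! i = ps ! Suc j" by blast
      moreover have "ps ! i = ps ! j \<longleftrightarrow> i = j" using d ij l by (simp add: nth_eq_iff_index_eq)
      moreover have "ps ! i = ps ! Suc j \<longleftrightarrow> i = Suc j" using d ij l by (simp add: nth_eq_iff_index_eq)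
      moreover have "ps ! Suc i = ps ! j \<longleftrightarrow> Suc i = j" using d ij l by (simp add: nth_eq_iff_index_eq)
      moreover have "ps ! Suc i \<in> {ps ! j, ps ! Suc j}" using \<open>{ps ! i, ps ! Suc i} = {ps ! j, ps ! Suc j}\<close> by blast
      moreover have "ps ! Suc i = ps ! Suc j \<longleftrightarrow> i = j" using d ij l by (simp add: nth_eq_iff_index_eq)
      ultimately show False using ij by auto
    qed
  qed
qed

lemma subpath:
  assumes "is_path V E ends (ps, es)" "i \<le> j" "j < length ps"
  shows "xy_path V E ends (ps ! i) (ps ! j)
           (take (Suc (j - i)) (drop i ps), take (j - i) (drop i es))"
proof -
  have d: "distinct ps" and l: "length ps = length es + 1"
    and en: "\<forall>i < length es. ends (es ! i) = {ps ! i, ps ! Suc i}"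
    and sV: "set ps \<subseteq> V" and sE: "set es \<subseteq> E"
    using assms by (auto simp: is_path_def)
  have len1: "length (take (Suc (j - i)) (drop i ps)) = Suc (j - i)" using assms by auto
  have len2: "length (take (j - i) (drop i es)) = j - i" using assms l by auto
  have "is_path V E ends (take (Suc (j - i)) (drop i ps), take (j - i) (drop i es))"
    unfolding is_path_def fst_conv snd_conv
  proof (intro conjI)
    show "take (Suc (j - i)) (drop i ps) \<noteq> []" using len1 by auto
    show "distinct (take (Suc (j - i)) (drop i ps))" using d by (simp add: distinct_take distinct_drop)
    show "length (take (Suc (j - i)) (drop i ps)) = length (take (j - i) (drop i es)) + 1"
      using len1 len2 by simp
    show "set (take (Suc (j - i)) (drop i ps)) \<subseteq> V"
      using sV by (meson dual_order.trans set_drop_subset set_take_subset)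
    show "set (take (j - i) (drop i es)) \<subseteq> E"
      using sE by (meson dual_order.trans set_drop_subset set_take_subset)
    show "\<forall>m<length (take (j - i) (drop i es)).
       ends (take (j - i) (drop i es) ! m) =
       {take (Suc (j - i)) (drop i ps) ! m, take (Suc (j - i)) (drop i ps) ! Suc m}"
    proof (intro allI impI)
      fix m assume m: "m < length (take (j - i) (drop i es))"
      hence m': "m < j - i" using len2 by simp
      have "i + m < length es" using m' assms l by auto
      then show "ends (take (j - i) (drop i es) ! m) =
       {take (Suc (j - i)) (drop i ps) ! m, take (Suc (j - i)) (drop i ps) ! Suc m}"
        using m' en assms l by auto
    qed
  qed
  moreover have "hd (take (Suc (j - i)) (drop i ps)) = ps ! i"
    using assms by (simp add: hd_drop_conv_nth)
  moreover have "last (take (Suc (j - i)) (drop i ps)) = ps ! j"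
    using assms len1 by (simp add: last_conv_nth)
  ultimately show ?thesis by (simp add: xy_path_def)
qed

lemma subpath_edges:
  assumes "e \<in> set (take (j - i) (drop i es))"
  shows "\<exists>m. i \<le> m \<and> m < j \<and> m < length es \<and> e = es ! m"
proof -
  from assms obtain k where k: "k < length (take (j - i) (drop i es))"
    "e = take (j - i) (drop i es) ! k" by (auto simp: in_set_conv_nth)
  then show ?thesis by (intro exI[of _ "i + k"]) auto
qed


theorem mainTheorem13:
  fixes V :: "'v set" and E :: "'e set" and ends :: "'e \<Rightarrow> 'v set"
    and x y :: 'v and r :: nat and S :: "('v list \<times> 'e list) set"
  assumes "multigraph V E ends"
    and "r \<ge> 3"
    and "x \<in> V" and "y \<in> V" and "x \<noteq> y"
    and "card S = 4"
    and "r_compatible V E ends x y r S"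
  shows "immersion (C_V r) (C_E 2 r) (C_ends r) V E ends"
proof -
  note rc = assms(7)[unfolded r_compatible_def]
  have paths: "\<And>P. P \<in> S \<Longrightarrow> xy_path V E ends x y P" using rc by blast
  have disj: "\<And>P Q. P \<in> S \<Longrightarrow> Q \<in> S \<Longrightarrow> P \<noteq> Q \<Longrightarrow> edge_disjoint P Q" using rc by blast
  obtain P Q where PQ: "P \<in> S" "Q \<in> S" "P \<noteq> Q" "aligned P Q"
    "card (set (fst P) \<inter> set (fst Q)) \<ge> r" using rc by blast
  have finS: "finite S" using assms(6) by (metis card.infinite zero_neq_numeral)
  have "card (S - {P, Q}) = 2" using PQ finS assms(6) by (simp add: card_Diff_subset)
  then obtain R1 R2 where R: "S - {P, Q} = {R1, R2}" "R1 \<noteq> R2" by (auto simp: card_2_iff)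
  have R1: "R1 \<in> S" "R1 \<noteq> P" "R1 \<noteq> Q" and R2: "R2 \<in> S" "R2 \<noteq> P" "R2 \<noteq> Q"
    using R by blast+
  obtain ps es where Pdef: "P = (ps, es)" by (cases P)
  obtain qs fs where Qdef: "Q = (qs, fs)" by (cases Q)
  have pP: "is_path V E ends (ps, es)" "hd ps = x" "last ps = y"
    using paths[OF PQ(1)] Pdef by (auto simp: xy_path_def)
  have pQ: "is_path V E ends (qs, fs)" "hd qs = x" "last qs = y"
    using paths[OF PQ(2)] Qdef by (auto simp: xy_path_def)
  have dps: "distinct ps" and lps: "length ps = length es + 1" and sV: "set ps \<subseteq> V"
    using pP by (auto simp: is_path_def)
  have dqs: "distinct qs" and lqs: "length qs = length fs + 1"
    using pQ by (auto simp: is_path_def)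
  have des: "distinct es" using path_distinct_edges[OF pP(1)] .
  have dfs: "distinct fs" using path_distinct_edges[OF pQ(1)] .
  have PQdis: "set es \<inter> set fs = {}" using disj[OF PQ(1,2,3)] Pdef Qdef by (simp add: edge_disjoint_def)
  have al: "aligned (ps, es) (qs, fs)" using PQ(4) Pdef Qdef by simp
  define n where "n = length ps"
  define m where "m = length qs"
  have n0: "n > 0" and m0: "m > 0" using lps lqs n_def m_def by auto
  have ps0: "ps ! 0 = x" using pP n0 n_def by (simp add: hd_conv_nth[symmetric])
  have psn: "ps ! (n - 1) = y" using pP n0 n_def by (simp add: last_conv_nth)
  have qs0: "qs ! 0 = x" using pQ m0 m_def by (simp add: hd_conv_nth[symmetric])
  have qsm: "qs ! (m - 1) = y" using pQ m0 m_def by (simp add: last_conv_nth)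
  define I where "I = {i. i < n \<and> ps ! i \<in> set qs}"
  have finI: "finite I" unfolding I_def by simp
  have "nth ps ` I = set ps \<inter> set qs"
    unfolding I_def n_def
  proof (intro equalityI subsetI)
    fix v assume "v \<in> set ps \<inter> set qs"
    then obtain i where "i < length ps" "ps ! i = v" "v \<in> set qs" by (auto simp: in_set_conv_nth)
    then show "v \<in> nth ps ` {i. i < length ps \<and> ps ! i \<in> set qs}" by auto
  qed auto
  moreover have "inj_on (nth ps) I" using dps by (intro inj_on_nth) (auto simp: I_def n_def)
  ultimately have cardI: "card I = card (set ps \<inter> set qs)" by (metis card_image)
  hence cardI': "card I \<ge> r" using PQ(5) Pdef Qdef by simp
  obtain L where L: "sorted_wrt (<) L" "set L = I"
    using ex1_sorted_list_for_set_if_finite[OF finI] by blast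
  have lenL: "length L = card I"
    using L by (metis distinct_card strict_sorted_iff)
  have Lless: "\<And>i j. i < j \<Longrightarrow> j < length L \<Longrightarrow> L ! i < L ! j"
    using L(1) sorted_wrt_nth_less by blast
  have LI: "\<And>i. i < length L \<Longrightarrow> L ! i \<in> I" using L(2) nth_mem by blast
  have "0 \<in> I" unfolding I_def using n0 ps0 qs0 m0 m_def by (metis (mono_tags, lifting) mem_Collect_eq nth_mem)
  then obtain k0 where k0: "k0 < length L" "L ! k0 = 0" using L(2) by (metis in_set_conv_nth)
  have L0: "L ! 0 = 0"
  proof (cases k0)
    case 0 then show ?thesis using k0 by simp
  next
    case (Suc k) then show ?thesis using Lless[of 0 k0] k0 by simp
  qed
  define a where "a k = (if k = r - 1 then n - 1 else L ! k)" for k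
  have a0: "a 0 = 0" using assms(2) L0 a_def by simp
  have ar: "a (r - 1) = n - 1" using a_def by simp
  have lastL: "L ! (length L - 1) < n" using LI[of "length L - 1"] cardI' lenL assms(2) I_def by auto
  have a_mono: "\<And>k l. k < l \<Longrightarrow> l < r \<Longrightarrow> a k < a l"
  proof -
    fix k l assume kl: "k < l" "l < r"
    show "a k < a l"
    proof (cases "l = r - 1")
      case True
      have "L ! k < L ! (length L - 1)"
        proof -
        have "k < length L - 1" using kl lenL cardI' by linarith
        then show ?thesis using Lless[of k "length L - 1"] by simp
      qed
      then show ?thesis using True kl lastL a_def by auto
    next
      case False
      then show ?thesis using kl Lless[of k l] lenL cardI' a_def by auto
    qed
  qed
  have a_lt: "\<And>k. k < r \<Longrightarrow> a k < n"
  proof -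
    fix k assume k: "k < r"
    show "a k < n"
    proof (cases "k = r - 1")
      case True then show ?thesis using ar n0 by simp
    next
      case False then have "a k < a (r - 1)" using a_mono[of k "r - 1"] k by simp
      then show ?thesis using ar by simp
    qed
  qed
  have a_in: "\<And>k. k < r \<Longrightarrow> ps ! a k \<in> set qs"
  proof -
    fix k assume k: "k < r"
    show "ps ! a k \<in> set qs"
    proof (cases "k = r - 1")
      case True then show ?thesis using ar psn qsm m0 m_def by (metis nth_mem diff_less zero_less_one)
    next
      case False then have "k < length L" using k lenL cardI' by simp
      then show ?thesis using LI a_def False I_def by auto
    qed
  qed
  have a_inj: "\<And>k l. k < r \<Longrightarrow> l < r \<Longrightarrow> ps ! a k = ps ! a l \<Longrightarrow> k = l"
  proof -
    fix k l assume kl: "k < r" "l < r" "ps ! a k = ps ! a l"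
    then have "a k = a l" using dps a_lt n_def by (simp add: nth_eq_iff_index_eq)
    then show "k = l" using a_mono kl by (metis less_irrefl nat_neq_iff)
  qed
  define b where "b k = (SOME j. j < m \<and> qs ! j = ps ! a k)" for k
  have b: "\<And>k. k < r \<Longrightarrow> b k < m \<and> qs ! b k = ps ! a k"
  proof -
    fix k assume "k < r"
    then have "\<exists>j. j < m \<and> qs ! j = ps ! a k" using a_in m_def by (metis in_set_conv_nth)
    then show "b k < m \<and> qs ! b k = ps ! a k" unfolding b_def by (rule someI_ex)
  qed
  have b_pos: "\<And>k. 0 < k \<Longrightarrow> k < r \<Longrightarrow> 0 < b k"
  proof -
    fix k assume k: "0 < k" "k < r"
    have "b k \<noteq> 0"
    proof
      assume "b k = 0"
      then have "ps ! a k = ps ! a 0" using b[OF k(2)] qs0 ps0 a0 by simp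
      then show False using a_inj[of k 0] k by simp
    qed
    then show "0 < b k" by simp
  qed
  have b_top: "\<And>k. k < r - 1 \<Longrightarrow> b k < m - 1"
  proof -
    fix k assume k: "k < r - 1"
    have "b k \<noteq> m - 1"
    proof
      assume "b k = m - 1"
      then have "ps ! a k = ps ! a (r - 1)" using b[of k] k qsm psn ar by simp
      then show False using a_inj[of k "r - 1"] k by simp
    qed
    moreover have "k < r" using k by simp
    ultimately show "b k < m - 1" using b[of k] by fastforce
  qed
  have b_last: "b (r - 1) = m - 1"
  proof -
    have "qs ! b (r - 1) = qs ! (m - 1)" using b[of "r - 1"] assms(2) psn qsm ar by simp
    moreover have "b (r - 1) < m" "m - 1 < m" using b[of "r - 1"] assms(2) m0 by auto
    ultimately show ?thesis using dqs m_def nth_eq_iff_index_eq by metis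
  qed
  have b_mono: "\<And>k l. k < l \<Longrightarrow> l < r \<Longrightarrow> b k < b l"
  proof -
    fix k l assume kl: "k < l" "l < r"
    show "b k < b l"
    proof (cases "k = 0")
      case True
      have "b 0 < m" "qs ! b 0 = qs ! 0" using b[of 0] assms(2) qs0 ps0 a0 by auto
      then have "b 0 = 0" using dqs m_def m0 nth_eq_iff_index_eq by metis
      then show ?thesis using True b_pos[of l] kl by simp
    next
      case k0: False
      show ?thesis
      proof (cases "l = r - 1")
        case True then show ?thesis using b_top[of k] kl b_last by simp
      next
        case False
        have lr: "l < r - 1" using False kl by simp
        have i1: "0 < a k" "a k < n - 1" using a_mono[of 0 k] a_mono[of k "r - 1"] kl k0 a0 ar by auto
        have i2: "0 < a l" "a l < n - 1" using a_mono[of 0 l] a_mono[of l "r - 1"] kl lr a0 ar by auto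
        have j1: "0 < b k" "b k < m - 1" using b_pos[of k] b_top[of k] kl k0 lr by auto
        have j2: "0 < b l" "b l < m - 1" using b_pos[of l] b_top[of l] kl lr by auto
        have ne: "ps ! a k \<noteq> ps ! a l" using a_inj[of k l] kl by auto
        have "(int (a k) - int (a l)) * (int (b k) - int (b l)) > 0"
        proof -
          have bk: "qs ! b k = ps ! a k" "qs ! b l = ps ! a l" using b[of k] b[of l] kl by auto
          have A: "\<forall>i1 i2 j1 j2.
        0 < i1 \<and> i1 < length ps - 1 \<and> 0 < i2 \<and> i2 < length ps - 1 \<and>
        0 < j1 \<and> j1 < length qs - 1 \<and> 0 < j2 \<and> j2 < length qs - 1 \<and>
        ps ! i1 = qs ! j1 \<and> ps ! i2 = qs ! j2 \<and> ps ! i1 \<noteq> ps ! i2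
        \<longrightarrow> (int i1 - int i2) * (int j1 - int j2) > 0"
            using al unfolding aligned_def fst_conv .
          show ?thesis
            using A[rule_format, of "a k" "a l" "b k" "b l"] i1 i2 j1 j2 ne bk
            unfolding n_def m_def by simp
        qed
        moreover have "int (a k) - int (a l) < 0" using a_mono[OF kl] by simp
        ultimately show ?thesis by (simp add: zero_less_mult_iff)
      qed
    qed
  qed
  have a_le: "\<And>k l. k \<le> l \<Longrightarrow> l < r \<Longrightarrow> a k \<le> a l"
    using a_mono by (metis le_neq_implies_less less_imp_le order_refl)
  have b_le: "\<And>k l. k \<le> l \<Longrightarrow> l < r \<Longrightarrow> b k \<le> b l"
    using b_mono by (metis le_neq_implies_less less_imp_le order_refl)
  define segP where "segP k = (take (Suc (a (Suc k) - a k)) (drop (a k) ps), take (a (Suc k) - a k) (drop (a k) es))" for k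
  define segQ where "segQ k = (take (Suc (b (Suc k) - b k)) (drop (b k) qs), take (b (Suc k) - b k) (drop (b k) fs))" for k
  define \<pi> where "\<pi> (e :: nat \<times> nat) = (if fst e = r - 1 then (if snd e = 0 then R1 else R2)
       else if snd e = 0 then segP (fst e) else segQ (fst e))" for e
  define \<phi> where "\<phi> k = ps ! a k" for k
  have R1P: "set (snd R1) \<inter> set es = {}" "set (snd R1) \<inter> set fs = {}"
    using disj[OF R1(1) PQ(1) R1(2)] disj[OF R1(1) PQ(2) R1(3)] Pdef Qdef by (auto simp: edge_disjoint_def)
  have R2P: "set (snd R2) \<inter> set es = {}" "set (snd R2) \<inter> set fs = {}"
    using disj[OF R2(1) PQ(1) R2(2)] disj[OF R2(1) PQ(2) R2(3)] Pdef Qdef by (auto simp: edge_disjoint_def)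
  have R12: "set (snd R1) \<inter> set (snd R2) = {}"
    using disj[OF R1(1) R2(1) R(2)] by (auto simp: edge_disjoint_def)
  have EP: "\<And>k f. f \<in> set (snd (segP k)) \<Longrightarrow> \<exists>j. a k \<le> j \<and> j < a (Suc k) \<and> j < length es \<and> f = es ! j"
    unfolding segP_def snd_conv by (rule subpath_edges)
  have EQ: "\<And>k f. f \<in> set (snd (segQ k)) \<Longrightarrow> \<exists>j. b k \<le> j \<and> j < b (Suc k) \<and> j < length fs \<and> f = fs ! j"
    unfolding segQ_def snd_conv by (rule subpath_edges)
  have key: "False" if kt: "k < r" "t < 2" "k' < r" "t' < 2" "(k, t) \<noteq> (k', t')"
    and f: "f \<in> set (snd (\<pi> (k, t)))" "f \<in> set (snd (\<pi> (k', t')))" for k t k' t' f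
  proof (cases "k = r - 1")
    case True
    then have "f \<in> set (snd R1) \<union> set (snd R2)" using f(1) \<pi>_def by (auto split: if_splits)
    show False
    proof (cases "k' = r - 1")
      case True
      then show False using f \<open>k = r - 1\<close> kt R12 \<pi>_def by (auto split: if_splits)
    next
      case False
      then have "f \<in> set es \<or> f \<in> set fs" using f(2) \<pi>_def EP EQ by (fastforce split: if_splits)
      then show False using \<open>f \<in> set (snd R1) \<union> set (snd R2)\<close> R1P R2P by blast
    qed
  next
    case kF: False
    show False
    proof (cases "k' = r - 1")
      case True
      then have "f \<in> set (snd R1) \<union> set (snd R2)" using f(2) \<pi>_def by (auto split: if_splits)
      moreover have "f \<in> set es \<or> f \<in> set fs" using f(1) kF \<pi>_def EP EQ by (fastforce split: if_splits)
      ultimately show False using R1P R2P by blast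
    next
      case k'F: False
      show False
      proof (cases "t = t'")
        case False
        then have "(t = 0 \<and> t' = 1) \<or> (t = 1 \<and> t' = 0)" using kt by auto
        then have "(f \<in> set es \<and> f \<in> set fs)" using f kF k'F \<pi>_def EP EQ by (fastforce split: if_splits)
        then show False using PQdis by blast
      next
        case True
        then have kk: "k \<noteq> k'" using kt by auto
        have gen: False if lt: "k1 < k2" "k2 < r - 1" "k1 < r - 1" "tt < 2"
          and g: "f \<in> set (snd (\<pi> (k1, tt)))" "f \<in> set (snd (\<pi> (k2, tt)))" for k1 k2 tt
        proof (cases "tt = 0")
          case True
          then have "f \<in> set (snd (segP k1))" "f \<in> set (snd (segP k2))" using g lt \<pi>_def by auto
          then obtain j1 j2 where j: "a k1 \<le> j1" "j1 < a (Suc k1)" "j1 < length es" "f = es ! j1"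
            "a k2 \<le> j2" "j2 < a (Suc k2)" "j2 < length es" "f = es ! j2" using EP by meson
          have "a (Suc k1) \<le> a k2" using a_le[of "Suc k1" k2] lt by simp
          then have "j1 \<noteq> j2" using j by simp
          then show False using j des nth_eq_iff_index_eq by metis
        next
          case False
          then have "f \<in> set (snd (segQ k1))" "f \<in> set (snd (segQ k2))" using g lt \<pi>_def by auto
          then obtain j1 j2 where j: "b k1 \<le> j1" "j1 < b (Suc k1)" "j1 < length fs" "f = fs ! j1"
            "b k2 \<le> j2" "j2 < b (Suc k2)" "j2 < length fs" "f = fs ! j2" using EQ by meson
          have "b (Suc k1) \<le> b k2" using b_le[of "Suc k1" k2] lt by simp
          then have "j1 \<noteq> j2" using j by simp
          then show False using j dfs nth_eq_iff_index_eq by metis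
        qed
        have "k < r - 1" "k' < r - 1" using kt kF k'F by auto
        then show False using gen[of k k' t] gen[of k' k t] kk f True kt by (metis nat_neq_iff)
      qed
    qed
  qed
  show ?thesis
    unfolding immersion_def
  proof (intro exI[of _ \<phi>] exI[of _ \<pi>] conjI ballI impI)
    show "inj_on \<phi> (C_V r)" unfolding inj_on_def \<phi>_def C_V_def using a_inj by blast
    show "\<phi> ` C_V r \<subseteq> V" unfolding \<phi>_def C_V_def using a_lt sV n_def by (auto intro!: nth_mem[THEN subsetD[OF sV]])
  next
    fix e assume e: "e \<in> C_E 2 r"
    obtain k t where et: "e = (k, t)" "k < r" "t < 2" using e by (auto simp: C_E_def)
    show "\<exists>u v. C_ends r e = {u, v} \<and> xy_path V E ends (\<phi> u) (\<phi> v) (\<pi> e)"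
    proof (cases "k = r - 1")
      case True
      have "C_ends r e = {0, r - 1}" using True et assms(2) by (auto simp: C_ends_def)
      moreover have "\<phi> 0 = x" "\<phi> (r - 1) = y" using a0 ar ps0 psn \<phi>_def by auto
      moreover have "xy_path V E ends x y (\<pi> e)" using True et paths R1(1) R2(1) \<pi>_def by auto
      ultimately show ?thesis by metis
    next
      case False
      then have k1: "Suc k < r" using et by simp
      have "C_ends r e = {k, Suc k}" using k1 et by (auto simp: C_ends_def)
      moreover have "xy_path V E ends (\<phi> k) (\<phi> (Suc k)) (\<pi> e)"
      proof (cases "t = 0")
        case True
        have "xy_path V E ends (ps ! a k) (ps ! a (Suc k)) (segP k)"
          unfolding segP_def by (rule subpath[OF pP(1)]) (use a_le[of k "Suc k"] a_lt[OF k1] k1 n_def in auto)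
        then show ?thesis using True False et \<pi>_def \<phi>_def by simp
      next
        case t1: False
        have "xy_path V E ends (qs ! b k) (qs ! b (Suc k)) (segQ k)"
          unfolding segQ_def by (rule subpath[OF pQ(1)]) (use b_le[of k "Suc k"] b[OF k1] k1 m_def in auto)
        moreover have "qs ! b k = ps ! a k" "qs ! b (Suc k) = ps ! a (Suc k)" using b[OF k1] b[of k] k1 by auto
        ultimately show ?thesis using t1 False et \<pi>_def \<phi>_def by simp
      qed
      ultimately show ?thesis by metis
    qed
  next
    fix e e' assume e: "e \<in> C_E 2 r" "e' \<in> C_E 2 r" "e \<noteq> e'"
    obtain k t where et: "e = (k, t)" "k < r" "t < 2" using e by (auto simp: C_E_def)
    obtain k' t' where et': "e' = (k', t')" "k' < r" "t' < 2" using e by (auto simp: C_E_def)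
    show "edge_disjoint (\<pi> e) (\<pi> e')"
      unfolding edge_disjoint_def using key[of k t k' t'] et et' e(3) by blast
  qed
qed

end
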